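(* Let $L\subseteq B_i$ be an SINR-feasible set of links in a bucket $B_i$, let $e\in B_i$, and let $L^\ell=\{e'\in L: d_{e'}\le d_{e'e}\}$. Then there exists a set $G$ of at most six receivers of links in $L^\ell$ such that for every $e'\in L^\ell$ there is $g\in G$ with $d_{e'g}\le 2d_{e'e}$.
   Context: Nodes lie in the Euclidean plane. A link is $e=(s_e,r_e,P_e)$ with transmitter $s_e$, receiver $r_e$ and power $P_e>0$; $\mathcal{L}$ is the set of links. $d_e=d(s_e,r_e)$, $d_{e'e}=d(s_{e'},r_e)$, and for a point $g$, $d_{e'g}=d(s_{e'},g)$. With constants $\alpha\ge0,N>0,\beta>0$: $S_e=P_e/d_e^\alpha$, $S_{e'e}=P_{e'}/d_{e'e}^\alpha$; $L$ is SINR-feasible if $S_e/(N+\sum_{e'\in L\setminus\{e\}}S_{e'e})\ge\beta$ for all $e\in L$. Buckets: $S_{\min}=\min_{e\in\mathcal{L}}S_e$, $B_i=\{e\in\mathcal{L}:2^iS_{\min}\le S_e<2^{i+1}S_{\min}\}$. *)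

theory Defs
  imports "HOL-Analysis.Analysis"
begin

type_synonym point = "real^2"

type_synonym link = "point \<times> point \<times> real"

definition sndr :: "link \<Rightarrow> point" where "sndr e = fst e"
definition rcvr :: "link \<Rightarrow> point" where "rcvr e = fst (snd e)"
definition pwr :: "link \<Rightarrow> real" where "pwr e = snd (snd e)"

definition dlen :: "link \<Rightarrow> real" where "dlen e = dist (sndr e) (rcvr e)"
definition dcross :: "link \<Rightarrow> link \<Rightarrow> real" where "dcross e' e = dist (sndr e') (rcvr e)"

text \<open>d^alpha, with the convention d^0 = 1 (Isabelle has 0 powr 0 = 0).
  A value 0 means the path loss is zero, i.e. infinite received signal.\<close>
definition ploss :: "real \<Rightarrow> real \<Rightarrow> real" where
  "ploss \<alpha> d = (if \<alpha> = 0 then 1 else d powr \<alpha>)"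

definition sig :: "real \<Rightarrow> link \<Rightarrow> real" where
  "sig \<alpha> e = pwr e / ploss \<alpha> (dlen e)"

definition interf :: "real \<Rightarrow> link \<Rightarrow> link \<Rightarrow> real" where
  "interf \<alpha> e' e = pwr e' / ploss \<alpha> (dcross e' e)"

text \<open>SINR feasibility. Interference from a sender located exactly at the receiver
  (with alpha > 0) is infinite, hence such a set is infeasible.\<close>
definition sinr_feasible :: "real \<Rightarrow> real \<Rightarrow> real \<Rightarrow> link set \<Rightarrow> bool" where
  "sinr_feasible \<alpha> N \<beta> L \<longleftrightarrow>
     (\<forall>e\<in>L. (\<forall>e'\<in>L - {e}. ploss \<alpha> (dcross e' e) > 0) \<and>
        sig \<alpha> e / (N + (\<Sum>e'\<in>L - {e}. interf \<alpha> e' e)) \<ge> \<beta>)"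

definition Smin :: "real \<Rightarrow> link set \<Rightarrow> real" where
  "Smin \<alpha> \<L> = Min (sig \<alpha> ` \<L>)"

definition bucket :: "real \<Rightarrow> link set \<Rightarrow> nat \<Rightarrow> link set" where
  "bucket \<alpha> \<L> i = {e\<in>\<L>. 2^i * Smin \<alpha> \<L> \<le> sig \<alpha> e \<and> sig \<alpha> e < 2^(i+1) * Smin \<alpha> \<L>}"

end

theory Submission
  imports Defs
begin

definition zc :: "point \<Rightarrow> complex" where "zc p = Complex (p$1) (p$2)"

lemma zc_diff: "zc p - zc q = zc (p - q)"
  by (simp add: zc_def complex_eq_iff)

lemma norm_zc: "cmod (zc p) = norm p"
proof -
  have "norm p = sqrt ((p$1)\<^sup>2 + (p$2)\<^sup>2)"
    by (simp add: norm_vec_def L2_set_def sum_2)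
  moreover have "cmod (zc p) = sqrt ((p$1)\<^sup>2 + (p$2)\<^sup>2)"
    by (simp add: zc_def cmod_def)
  ultimately show ?thesis by simp
qed

lemma zc_zero: "zc p = 0 \<Longrightarrow> p = 0"
  using norm_zc[of p] by simp

lemma sector:
  fixes z w :: complex
  assumes "ceiling ((Arg z + pi)/(pi/3)) = ceiling ((Arg w + pi)/(pi/3))"
  shows "cmod (z - w) \<le> max (cmod z) (cmod w)"
proof -
  define t1 where "t1 = Arg z"
  define t2 where "t2 = Arg w"
  define r1 where "r1 = cmod z"
  define r2 where "r2 = cmod w"
  have p3: "pi/3 > 0" by simp
  have "\<bar>(t1 + pi)/(pi/3) - (t2 + pi)/(pi/3)\<bar> < 1"
  proof -
    define x1 where "x1 = (t1 + pi)/(pi/3)"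
    define x2 where "x2 = (t2 + pi)/(pi/3)"
    have e: "ceiling x1 = ceiling x2" using assms by (simp add: x1_def x2_def t1_def t2_def)
    have "of_int (ceiling x1) - 1 < x1" "x1 \<le> of_int (ceiling x1)"
         "of_int (ceiling x2) - 1 < x2" "x2 \<le> of_int (ceiling x2)"
      by (simp_all add: ceiling_correct)
    hence "\<bar>x1 - x2\<bar> < 1" using e by linarith
    thus ?thesis by (simp add: x1_def x2_def)
  qed
  hence "\<bar>t1 - t2\<bar>/(pi/3) < 1" using p3
    by (simp only: diff_divide_distrib[symmetric] abs_divide add_diff_add) (simp add: abs_of_pos)
  hence d: "\<bar>t1 - t2\<bar> < pi/3" using p3 by (simp add: divide_less_eq)
  have "cos (\<bar>t1 - t2\<bar>) > cos (pi/3)"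
    using d by (intro cos_monotone_0_pi) auto
  hence c: "cos (t1 - t2) > 1/2" by (simp add: cos_60 abs_if split: if_splits) (metis cos_minus minus_diff_eq)
  have z: "z = rcis r1 t1" and w: "w = rcis r2 t2"
    by (simp_all add: rcis_cmod_Arg r1_def r2_def t1_def t2_def)
  have "(cmod (z - w))\<^sup>2 = (r1 * cos t1 - r2 * cos t2)\<^sup>2 + (r1 * sin t1 - r2 * sin t2)\<^sup>2"
    by (simp add: cmod_power2 z w)
  also have "\<dots> = r1\<^sup>2 * ((cos t1)\<^sup>2 + (sin t1)\<^sup>2) + r2\<^sup>2 * ((cos t2)\<^sup>2 + (sin t2)\<^sup>2)
       - 2 * r1 * r2 * (cos t1 * cos t2 + sin t1 * sin t2)"
    unfolding power2_eq_square by algebra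
  also have "\<dots> = r1\<^sup>2 + r2\<^sup>2 - 2 * r1 * r2 * cos (t1 - t2)"
    by (simp add: cos_diff sin_cos_squared_add add.commute[of "(cos _)\<^sup>2"])
  also have "\<dots> \<le> r1\<^sup>2 + r2\<^sup>2 - r1 * r2"
  proof -
    have "r1 * r2 \<ge> 0" by (simp add: r1_def r2_def)
    hence "r1 * r2 * 1 \<le> r1 * r2 * (2 * cos (t1 - t2))"
      using c by (intro mult_left_mono) auto
    thus ?thesis by simp
  qed
  also have "\<dots> \<le> (max r1 r2)\<^sup>2"
    using r1_def r2_def
    by (cases "r1 \<le> r2") (auto simp: max_def power2_eq_square algebra_simps
        intro: mult_right_mono mult_left_mono)
  finally have "(cmod (z - w))\<^sup>2 \<le> (max r1 r2)\<^sup>2" .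
  hence "cmod (z - w) \<le> max r1 r2"
    by (rule power2_le_imp_le) (simp add: r1_def le_max_iff_disj)
  thus ?thesis by (simp add: r1_def r2_def)
qed

lemma greedy:
  fixes S :: "link set" and s :: "link \<Rightarrow> point" and c :: point
  assumes "finite S"
  shows "\<exists>R\<subseteq>S. (\<forall>a\<in>R. \<forall>b\<in>R. a \<noteq> b \<longrightarrow> dist (s a) (s b) > max (dist (s a) c) (dist (s b) c)) \<and>
     (\<forall>x\<in>S. \<exists>a\<in>R. dist (s a) c \<le> dist (s x) c \<and> dist (s x) (s a) \<le> dist (s x) c)"
  using assms
proof (induction S rule: finite_ranking_induct[where f = "\<lambda>x. dist (s x) c"])
  case empty
  then show ?case by auto
next
  case (insert x S)
  then obtain R where R: "R \<subseteq> S"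
    "\<forall>a\<in>R. \<forall>b\<in>R. a \<noteq> b \<longrightarrow> dist (s a) (s b) > max (dist (s a) c) (dist (s b) c)"
    "\<forall>y\<in>S. \<exists>a\<in>R. dist (s a) c \<le> dist (s y) c \<and> dist (s y) (s a) \<le> dist (s y) c" by blast
  show ?case
  proof (cases "\<exists>a\<in>R. dist (s x) (s a) \<le> dist (s x) c")
    case True
    then obtain a where a: "a \<in> R" "dist (s x) (s a) \<le> dist (s x) c" by blast
    have "dist (s a) c \<le> dist (s x) c" using insert.hyps(2)[OF subsetD[OF R(1) a(1)]] .
    then show ?thesis using R a by (intro exI[of _ R]) auto
  next
    case False
    have sep: "dist (s x) (s a) > max (dist (s x) c) (dist (s a) c)" if "a \<in> R" for a
    proof -
      have "dist (s a) c \<le> dist (s x) c" using insert.hyps(2)[OF subsetD[OF R(1) that]] .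
      thus ?thesis using False that by auto
    qed
    show ?thesis
    proof (intro exI[of _ "insert x R"] conjI)
      show "insert x R \<subseteq> insert x S" using R(1) by auto
      show "\<forall>a\<in>insert x R. \<forall>b\<in>insert x R. a \<noteq> b \<longrightarrow> max (dist (s a) c) (dist (s b) c) < dist (s a) (s b)"
        using R(2) sep by (auto simp: dist_commute max.commute)
      show "\<forall>y\<in>insert x S. \<exists>a\<in>insert x R. dist (s a) c \<le> dist (s y) c \<and> dist (s y) (s a) \<le> dist (s y) c"
        using R(3) by auto
    qed
  qed
qed

theorem lemma2:
  fixes \<L> L :: "link set" and e :: link and \<alpha> N \<beta> :: real and i :: nat
  assumes "finite \<L>"
    and "\<forall>f\<in>\<L>. pwr f > 0 \<and> sndr f \<noteq> rcvr f"
    and "\<alpha> \<ge> 0" and "N > 0" and "\<beta> > 0"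
    and "L \<subseteq> bucket \<alpha> \<L> i"
    and "sinr_feasible \<alpha> N \<beta> L"
    and "e \<in> bucket \<alpha> \<L> i"
  shows "\<exists>G. G \<subseteq> rcvr ` {e'\<in>L. dlen e' \<le> dcross e' e} \<and> card G \<le> 6 \<and>
           (\<forall>e'\<in>{e'\<in>L. dlen e' \<le> dcross e' e}. \<exists>g\<in>G. dist (sndr e') g \<le> 2 * dcross e' e)"
proof -
  define Ll where "Ll = {e'\<in>L. dlen e' \<le> dcross e' e}"
  define c where "c = rcvr e"
  have LL: "L \<subseteq> \<L>" using assms(6) unfolding bucket_def by auto
  have fin: "finite Ll" 
  proof (rule finite_subset[OF _ assms(1)])
    show "Ll \<subseteq> \<L>" using LL unfolding Ll_def by blast
  qed
  have ne: "sndr a \<noteq> c" if "a \<in> Ll" for a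
  proof
    assume "sndr a = c"
    hence "dlen a \<le> 0" using that by (simp add: Ll_def dcross_def c_def)
    hence "sndr a = rcvr a" by (simp add: dlen_def)
    thus False using that LL assms(2) by (auto simp: Ll_def)
  qed
  obtain R where R: "R \<subseteq> Ll"
    "\<forall>a\<in>R. \<forall>b\<in>R. a \<noteq> b \<longrightarrow> dist (sndr a) (sndr b) > max (dist (sndr a) c) (dist (sndr b) c)"
    "\<forall>x\<in>Ll. \<exists>a\<in>R. dist (sndr a) c \<le> dist (sndr x) c \<and> dist (sndr x) (sndr a) \<le> dist (sndr x) c"
    using greedy[OF fin, of sndr c] by blast
  have finR: "finite R" using R(1) fin finite_subset by auto
  define sec where "sec a = ceiling ((Arg (zc (sndr a - c)) + pi)/(pi/3))" for a
  have inj: "inj_on sec R"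
  proof (rule inj_onI, rule ccontr)
    fix a b assume ab: "a \<in> R" "b \<in> R" "sec a = sec b" "a \<noteq> b"
    have "cmod (zc (sndr a - c) - zc (sndr b - c)) \<le> max (cmod (zc (sndr a - c))) (cmod (zc (sndr b - c)))"
      using ab(3) unfolding sec_def by (rule sector)
    hence "dist (sndr a) (sndr b) \<le> max (dist (sndr a) c) (dist (sndr b) c)"
      by (simp add: zc_diff norm_zc dist_norm)
    thus False using R(2) ab by force
  qed
  have img: "sec ` R \<subseteq> {1..6}"
  proof
    fix k assume "k \<in> sec ` R"
    then obtain a where k: "k = sec a" by blast
    define t where "t = Arg (zc (sndr a - c))"
    have tb: "- pi < t" "t \<le> pi" using Arg_bounded t_def by auto
    have "0 < (t + pi)/(pi/3)" using tb by simp
    moreover have "(t + pi)/(pi/3) \<le> 6" using tb pi_gt_zero by (simp add: divide_le_eq)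
    ultimately have "1 \<le> ceiling ((t + pi)/(pi/3))" "ceiling ((t + pi)/(pi/3)) \<le> 6"
      by (simp_all add: ceiling_le_iff)
    thus "k \<in> {1..6}" by (simp add: k sec_def t_def)
  qed
  have "card R \<le> card {1..6::int}"
    by (rule card_inj_on_le[OF inj img]) simp
  hence cR: "card R \<le> 6" by simp
  show ?thesis
  proof (intro exI[of _ "rcvr ` R"] conjI)
    show "rcvr ` R \<subseteq> rcvr ` {e'\<in>L. dlen e' \<le> dcross e' e}" using R(1) Ll_def by auto
    show "card (rcvr ` R) \<le> 6" using card_image_le[OF finR, of rcvr] cR by linarith
    show "\<forall>e'\<in>{e'\<in>L. dlen e' \<le> dcross e' e}. \<exists>g\<in>rcvr ` R. dist (sndr e') g \<le> 2 * dcross e' e"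
    proof
      fix x assume x: "x \<in> {e'\<in>L. dlen e' \<le> dcross e' e}"
      hence xL: "x \<in> Ll" by (simp add: Ll_def)
      then obtain a where a: "a \<in> R" "dist (sndr a) c \<le> dist (sndr x) c"
        "dist (sndr x) (sndr a) \<le> dist (sndr x) c" using R(3) by blast
      have "dlen a \<le> dcross a e" using a(1) R(1) by (auto simp: Ll_def)
      hence da: "dist (sndr a) (rcvr a) \<le> dist (sndr a) c" by (simp add: dlen_def dcross_def c_def)
      have "dist (sndr x) (rcvr a) \<le> dist (sndr x) (sndr a) + dist (sndr a) (rcvr a)"
        by (rule dist_triangle)
      also have "\<dots> \<le> 2 * dist (sndr x) c" using a da by linarith
      finally show "\<exists>g\<in>rcvr ` R. dist (sndr x) g \<le> 2 * dcross x e"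
        using a(1) by (auto simp: dcross_def c_def)
    qed
  qed
qed

end
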